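(* Consider a SOCO problem with decision space $F=[x_L,x_H]$ and a sequence of discrete systems, indexed by $i$, whose state spacings $\delta_i$ tend to $0$ and each of which has $[x_1,x_m]=F$. Let $x_i=(x_i^t)_t$ denote the output of DRBG($N$) in the $i$-th discrete system and $\hat x=(\hat x^t)_t$ the output of RBG($N$) in the continuous system, all using the same random number $r$. Then with probability $1$, for all $t$, $\lim_{i\to\infty}|x_i^t-\hat x^t|=0$.
   Context: $F=[x_L,x_H]\subseteq\mathbb{R}^+$; $\|\cdot\|$ a norm on $\mathbb{R}$; $\theta\ge1$, $N(\cdot)=\theta\|\cdot\|$; cost functions $c^t:F\to\mathbb{R}^+$ convex (finite on $F$) with uniformly bounded subgradients. A discrete system is a set of states $M=\{x_1<\dots<x_m\}\subseteq F$ with equal spacing $\delta=x_{k+1}-x_k$, $x_1=x_L$, $x_m=x_H$, using the restrictions of $c^t$ to $M$. RBG($N$): $w^0(x)=N(x)$, $w^t(x)=\min_{y\in F}\{w^{t-1}(y)+c^t(y)+N(x-y)\}$, draw $r$ uniformly from $(-1,1)$, and at time $t$ choose $x^t\in F$ minimizing $Y^t(x)=w^{t-1}(x)+rN(x)$. DRBG($N$) is identical with $F$ replaced by $M$ both in the work function minimization and in the choice of $x^t$. Probability is over $r$. *)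

theory Defs
  imports "HOL-Analysis.Analysis" "HOL-Probability.Probability"
begin

definition is_real_norm :: "(real \<Rightarrow> real) \<Rightarrow> bool" where
  "is_real_norm nrm \<longleftrightarrow>
     (\<forall>x. 0 \<le> nrm x) \<and> (\<forall>x. nrm x = 0 \<longleftrightarrow> x = 0) \<and>
     (\<forall>a x. nrm (a * x) = \<bar>a\<bar> * nrm x) \<and>
     (\<forall>x y. nrm (x + y) \<le> nrm x + nrm y)"

definition unif_bounded_subgrad :: "(nat \<Rightarrow> real \<Rightarrow> real) \<Rightarrow> real set \<Rightarrow> bool" where
  "unif_bounded_subgrad c F \<longleftrightarrow>
     (\<exists>G. \<forall>t. \<forall>x\<in>F. \<exists>g. \<bar>g\<bar> \<le> G \<and> (\<forall>y\<in>F. c t y \<ge> c t x + g * (y - x)))"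

definition grid_spacing :: "real \<Rightarrow> real \<Rightarrow> nat \<Rightarrow> real" where
  "grid_spacing xL xH m = (xH - xL) / (real m - 1)"

definition grid :: "real \<Rightarrow> real \<Rightarrow> nat \<Rightarrow> real set" where
  "grid xL xH m = (\<lambda>k. xL + real k * grid_spacing xL xH m) ` {..<m}"

text \<open>Work function over a state set S (S = F for RBG, S = M for DRBG).\<close>
fun work :: "(real \<Rightarrow> real) \<Rightarrow> (nat \<Rightarrow> real \<Rightarrow> real) \<Rightarrow> real set \<Rightarrow> nat \<Rightarrow> real \<Rightarrow> real" where
  "work N c S 0 x = N x"
| "work N c S (Suc t) x = (INF y\<in>S. work N c S t y + c (Suc t) y + N (x - y))"

definition rbg_choice :: "(real \<Rightarrow> real) \<Rightarrow> (nat \<Rightarrow> real \<Rightarrow> real) \<Rightarrow> real set \<Rightarrow> real \<Rightarrow> nat \<Rightarrow> real \<Rightarrow> bool" where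
  "rbg_choice N c S r t x \<longleftrightarrow>
     x \<in> S \<and> (\<forall>y\<in>S. work N c S (t - 1) x + r * N x \<le> work N c S (t - 1) y + r * N y)"

end

theory Submission
  imports Defs
begin


lemma work_nonneg:
  assumes NK: "\<And>z. N z = K * \<bar>z\<bar>" and K: "0 \<le> K"
    and cnn: "\<And>t x. x \<in> F \<Longrightarrow> 0 \<le> c t x"
    and SF: "S \<subseteq> F" and Sne: "S \<noteq> {}"
  shows "0 \<le> work N c S s x"
proof (induction s arbitrary: x)
  case 0 then show ?case using NK K by simp
next
  case (Suc s)
  show ?case unfolding work.simps
  proof (rule cINF_greatest[OF Sne])
    fix y assume "y \<in> S"
    then show "0 \<le> work N c S s y + c (Suc s) y + N (x - y)"
    proof -
      have "0 \<le> N (x - y)" using NK K by simp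
      moreover have "0 \<le> c (Suc s) y" using cnn[of y] SF \<open>y \<in> S\<close> by auto
      ultimately show ?thesis using Suc.IH[of y] by linarith
    qed
  qed
qed


lemma f_nonneg:
  assumes NK: "\<And>z. N z = K * \<bar>z\<bar>" and K: "0 \<le> K"
    and cnn: "\<And>t x. x \<in> F \<Longrightarrow> 0 \<le> c t x"
    and SF: "S \<subseteq> F" and Sne: "S \<noteq> {}" and y: "y \<in> S"
  shows "0 \<le> work N c S s y + c t y + N (x - y)"
proof -
  have "0 \<le> work N c S s y" by (rule work_nonneg[OF NK K cnn SF Sne])
  moreover have "0 \<le> c t y" using cnn SF y by blast
  moreover have "0 \<le> N (x - y)" using NK K by simp
  ultimately show ?thesis by linarith
qed

lemma N_lip:
  fixes x y x' K :: real
  assumes NK: "\<And>z. N z = K * \<bar>z\<bar>" and K: "0 \<le> K"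
  shows "N (x - y) \<le> N (x' - y) + K * \<bar>x - x'\<bar>"
proof -
  have "\<bar>x - y\<bar> \<le> \<bar>x' - y\<bar> + \<bar>x - x'\<bar>" by (simp add: abs_if)
  then have "K * \<bar>x - y\<bar> \<le> K * (\<bar>x' - y\<bar> + \<bar>x - x'\<bar>)" using K by (rule mult_left_mono)
  then show ?thesis using NK by (simp add: algebra_simps)
qed

lemma work_lip:
  assumes NK: "\<And>z. N z = K * \<bar>z\<bar>" and K: "0 \<le> K"
    and cnn: "\<And>t x. x \<in> F \<Longrightarrow> 0 \<le> c t x"
    and SF: "S \<subseteq> F" and Sne: "S \<noteq> {}"
  shows "work N c S s x \<le> work N c S s x' + K * \<bar>x - x'\<bar>"
proof (cases s)
  case 0 then show ?thesis using N_lip[OF NK K, of x 0 x'] by simp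
next
  case (Suc s)
  let ?f = "\<lambda>x y. work N c S s y + c (Suc s) y + N (x - y)"
  have bdd: "bdd_below (?f x ` S)"
    by (rule bdd_belowI2[where m=0]) (rule f_nonneg[OF NK K cnn SF Sne])
  have "(INF y\<in>S. ?f x y) - K * \<bar>x - x'\<bar> \<le> (INF y\<in>S. ?f x' y)"
  proof (rule cINF_greatest[OF Sne])
    fix y assume y: "y \<in> S"
    have "(INF y\<in>S. ?f x y) \<le> ?f x y" by (rule cINF_lower[OF bdd y])
    also have "\<dots> \<le> ?f x' y + K * \<bar>x - x'\<bar>" using N_lip[OF NK K, of x y x'] by simp
    finally show "(INF y\<in>S. ?f x y) - K * \<bar>x - x'\<bar> \<le> ?f x' y" by simp
  qed
  then show ?thesis using Suc by simp
qed

lemma work_approx: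
  assumes NK: "\<And>z. N z = K * \<bar>z\<bar>" and K: "0 \<le> K"
    and cnn: "\<And>t x. x \<in> F \<Longrightarrow> 0 \<le> c t x"
    and clip: "\<And>t x y. x \<in> F \<Longrightarrow> y \<in> F \<Longrightarrow> \<bar>c t x - c t y\<bar> \<le> G * \<bar>x - y\<bar>"
    and SF: "S \<subseteq> F" and Sne: "S \<noteq> {}"
    and dense: "\<And>y. y \<in> F \<Longrightarrow> \<exists>y'\<in>S. \<bar>y - y'\<bar> \<le> \<delta>"
    and G: "0 \<le> G"
  shows "\<bar>work N c S s x - work N c F s x\<bar> \<le> real s * (2*K + G) * \<delta>"
proof (induction s arbitrary: x)
  case 0 then show ?case by simp
next
  case (Suc s)
  have Fne: "F \<noteq> {}" using SF Sne by auto
  let ?D = "real s * (2*K + G) * \<delta>"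
  let ?fS = "\<lambda>y. work N c S s y + c (Suc s) y + N (x - y)"
  let ?fF = "\<lambda>y. work N c F s y + c (Suc s) y + N (x - y)"
  have bddS: "bdd_below (?fS ` S)"
    by (rule bdd_belowI2[where m=0]) (rule f_nonneg[OF NK K cnn SF Sne])
  have bddF: "bdd_below (?fF ` F)"
    by (rule bdd_belowI2[where m=0]) (rule f_nonneg[OF NK K cnn order_refl Fne])
  have a: "(INF y\<in>F. ?fF y) - ?D \<le> (INF y\<in>S. ?fS y)"
  proof (rule cINF_greatest[OF Sne])
    fix y assume y: "y \<in> S"
    have "(INF y\<in>F. ?fF y) \<le> ?fF y" using y SF by (intro cINF_lower[OF bddF]) auto
    also have "\<dots> \<le> ?fS y + ?D" using Suc.IH[of y] by linarith
    finally show "(INF y\<in>F. ?fF y) - ?D \<le> ?fS y" by simp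
  qed
  have b: "(INF y\<in>S. ?fS y) - ?D - (2*K+G)*\<delta> \<le> (INF y\<in>F. ?fF y)"
  proof (rule cINF_greatest[OF Fne])
    fix y assume y: "y \<in> F"
    obtain y' where y': "y' \<in> S" "\<bar>y - y'\<bar> \<le> \<delta>" using dense[OF y] by blast
    have y'F: "y' \<in> F" using y' SF by auto
    have "(INF y\<in>S. ?fS y) \<le> ?fS y'" by (rule cINF_lower[OF bddS y'(1)])
    also have "\<dots> \<le> work N c F s y' + ?D + c (Suc s) y' + N (x - y')" using Suc.IH[of y'] by linarith
    also have "\<dots> \<le> ?fF y + ?D + (2*K+G)*\<delta>"
    proof -
      have 1: "work N c F s y' \<le> work N c F s y + K * \<bar>y' - y\<bar>"
        by (rule work_lip[OF NK K cnn order_refl Fne])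
      have 2: "c (Suc s) y' \<le> c (Suc s) y + G * \<bar>y' - y\<bar>" using clip[OF y'F y, of "Suc s"] by linarith
      have 3: "N (x - y') \<le> N (x - y) + K * \<bar>x - x\<bar> + K * \<bar>y - y'\<bar>"
      proof -
        have "\<bar>x - y'\<bar> \<le> \<bar>x - y\<bar> + \<bar>y - y'\<bar>" by (simp add: abs_if)
        then have "K * \<bar>x - y'\<bar> \<le> K * (\<bar>x - y\<bar> + \<bar>y - y'\<bar>)" using K by (rule mult_left_mono)
        then show ?thesis using NK by (simp add: algebra_simps)
      qed
      have 4: "K * \<bar>y' - y\<bar> \<le> K * \<delta>" "G * \<bar>y' - y\<bar> \<le> G * \<delta>" "K * \<bar>y - y'\<bar> \<le> K * \<delta>"
        using y'(2) K G by (auto intro: mult_left_mono simp: abs_minus_commute)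
      show ?thesis using 1 2 3 4 by (simp add: algebra_simps)
    qed
    finally show "(INF y\<in>S. ?fS y) - ?D - (2*K+G)*\<delta> \<le> ?fF y" by simp
  qed
  have e: "real (Suc s) * (2*K + G) * \<delta> = ?D + (2*K+G)*\<delta>" by (simp add: algebra_simps)
  obtain y0 where "y0 \<in> F" using Fne by auto
  then have d0: "0 \<le> \<delta>" using dense by force
  have "0 \<le> (2*K+G)*\<delta>" using d0 K G by simp
  then show ?case unfolding work.simps e abs_le_iff using a b by linarith
qed



lemma grid_props:
  fixes xL xH :: real
  assumes "xL < xH" "m \<ge> 2"
  shows "grid xL xH m \<subseteq> {xL..xH}" "grid xL xH m \<noteq> {}" "grid_spacing xL xH m > 0"
    "\<And>y. y \<in> {xL..xH} \<Longrightarrow> \<exists>y'\<in>grid xL xH m. \<bar>y - y'\<bar> \<le> grid_spacing xL xH m"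
proof -
  define \<delta> where "\<delta> = grid_spacing xL xH m"
  have m1: "real m - 1 > 0" using assms by auto
  have dpos: "\<delta> > 0" unfolding \<delta>_def grid_spacing_def using assms m1 by auto
  then show "grid_spacing xL xH m > 0" by (simp add: \<delta>_def)
  have md: "(real m - 1) * \<delta> = xH - xL" unfolding \<delta>_def grid_spacing_def using m1 by simp
  show "grid xL xH m \<subseteq> {xL..xH}"
  proof
    fix z assume "z \<in> grid xL xH m"
    then obtain k where k: "k < m" "z = xL + real k * \<delta>" unfolding grid_def \<delta>_def by auto
    have "real k \<le> real m - 1" using k by linarith
    then have "real k * \<delta> \<le> (real m - 1) * \<delta>" using dpos by (intro mult_right_mono) auto
    then show "z \<in> {xL..xH}" using k md dpos by auto
  qed
  have "0 \<in> {..<m}" using assms by simp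
  then show "grid xL xH m \<noteq> {}" unfolding grid_def by blast
  fix y assume y: "y \<in> {xL..xH}"
  define j where "j = nat \<lfloor>(y - xL) / \<delta>\<rfloor>"
  have q0: "(y - xL) / \<delta> \<ge> 0" using y dpos by auto
  have jr: "real j = of_int \<lfloor>(y - xL) / \<delta>\<rfloor>" unfolding j_def using q0 by simp
  have j1: "real j \<le> (y - xL) / \<delta>" "(y - xL) / \<delta> < real j + 1" using jr by linarith+
  have "y - xL \<le> (real m - 1) * \<delta>" using y md by auto
  then have "(y - xL) / \<delta> \<le> real m - 1"
    by (simp add: pos_divide_le_eq[OF dpos])
  then have jm: "j < m" using j1 by linarith
  have "real j * \<delta> \<le> y - xL" "y - xL < (real j + 1) * \<delta>"
    using j1 dpos by (simp_all add: le_divide_eq divide_less_eq)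
  then have "\<bar>y - (xL + real j * \<delta>)\<bar> \<le> \<delta>" by (simp add: algebra_simps)
  moreover have "xL + real j * \<delta> \<in> grid xL xH m" unfolding grid_def \<delta>_def using jm by auto
  ultimately show "\<exists>y'\<in>grid xL xH m. \<bar>y - y'\<bar> \<le> grid_spacing xL xH m" unfolding \<delta>_def by blast
qed

lemma choice_mono:
  assumes NK: "\<And>z. N z = K * \<bar>z\<bar>" and K: "0 < K" and F: "F \<subseteq> {0..}"
    and rr: "r < r'" and x: "rbg_choice N c F r t x" and x': "rbg_choice N c F r' t x'"
  shows "x' \<le> x"
proof -
  let ?w = "work N c F (t - 1)"
  have xF: "x \<in> F" and x'F: "x' \<in> F" using x x' unfolding rbg_choice_def by auto
  have 1: "?w x + r * N x \<le> ?w x' + r * N x'" using x x'F unfolding rbg_choice_def by auto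
  have 2: "?w x' + r' * N x' \<le> ?w x + r' * N x" using x' xF unfolding rbg_choice_def by auto
  have "(r' - r) * (N x' - N x) \<le> 0" using 1 2 by (simp add: algebra_simps)
  then have "N x' - N x \<le> 0" using rr by (simp add: mult_le_0_iff)
  moreover have "x \<ge> 0" "x' \<ge> 0" using F xF x'F by auto
  ultimately have "K * (x' - x) \<le> 0" using NK by (auto simp: algebra_simps)
  then show ?thesis using K by (simp add: mult_le_0_iff)
qed

lemma bad_countable:
  assumes NK: "\<And>z. N z = K * \<bar>z\<bar>" and K: "0 < K" and F: "F \<subseteq> {0..}"
  shows "countable {r. \<exists>x1 x2. x1 < x2 \<and> rbg_choice N c F r t x1 \<and> rbg_choice N c F r t x2}"
    (is "countable ?B")
proof -
  define p where "p r = (SOME p. fst p < snd p \<and> rbg_choice N c F r t (fst p) \<and> rbg_choice N c F r t (snd p))" for r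
  define q where "q r = (SOME q. q \<in> \<rat> \<and> fst (p r) < q \<and> q < snd (p r))" for r
  have pP: "fst (p r) < snd (p r) \<and> rbg_choice N c F r t (fst (p r)) \<and> rbg_choice N c F r t (snd (p r))"
    if "r \<in> ?B" for r
  proof -
    from that obtain x1 x2 where "x1 < x2 \<and> rbg_choice N c F r t x1 \<and> rbg_choice N c F r t x2" by auto
    then have "\<exists>p. fst p < snd p \<and> rbg_choice N c F r t (fst p) \<and> rbg_choice N c F r t (snd p)"
      by (intro exI[of _ "(x1,x2)"]) auto
    then show ?thesis unfolding p_def by (rule someI_ex)
  qed
  have qP: "q r \<in> \<rat> \<and> fst (p r) < q r \<and> q r < snd (p r)" if "r \<in> ?B" for r
  proof -
    have "\<exists>q. q \<in> \<rat> \<and> fst (p r) < q \<and> q < snd (p r)" using Rats_dense_in_real pP[OF that] by blast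
    then show ?thesis unfolding q_def by (rule someI_ex)
  qed
  have lt: "q r' < q r" if "r \<in> ?B" "r' \<in> ?B" "r < r'" for r r'
  proof -
    have h1: "rbg_choice N c F r t (fst (p r))" using pP[OF that(1)] by blast
    have h2: "rbg_choice N c F r' t (snd (p r'))" using pP[OF that(2)] by blast
    have "snd (p r') \<le> fst (p r)" by (rule choice_mono[OF NK K F \<open>r < r'\<close> h1 h2])
    moreover have "q r' < snd (p r')" using qP[OF that(2)] by blast
    moreover have "fst (p r) < q r" using qP[OF that(1)] by blast
    ultimately show ?thesis by linarith
  qed
  have inj: "inj_on q ?B"
  proof (rule inj_onI)
    fix r r' assume a: "r \<in> ?B" "r' \<in> ?B" "q r = q r'"
    show "r = r'"
    proof (rule ccontr)
      assume "r \<noteq> r'"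
      then consider "r < r'" | "r' < r" by linarith
      then show False
      proof cases
        case 1 then show ?thesis using lt[OF a(1) a(2)] a(3) by simp
      next
        case 2 then show ?thesis using lt[OF a(2) a(1)] a(3) by simp
      qed
    qed
  qed
  have "q ` ?B \<subseteq> \<rat>" using qP by auto
  then have "countable (q ` ?B)" using countable_rat countable_subset by blast
  then show ?thesis using inj by (rule countable_image_inj_on)
qed

lemma argmin_conv:
  fixes xL xH L xhat :: real and Y :: "real \<Rightarrow> real" and z e :: "nat \<Rightarrow> real"
  assumes lip: "\<And>x y. x \<in> {xL..xH} \<Longrightarrow> y \<in> {xL..xH} \<Longrightarrow> \<bar>Y x - Y y\<bar> \<le> L * \<bar>x - y\<bar>" and L: "0 \<le> L"
    and xh: "xhat \<in> {xL..xH}" and mn: "\<And>x. x \<in> {xL..xH} \<Longrightarrow> Y xhat \<le> Y x"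
    and uq: "\<And>x. x \<in> {xL..xH} \<Longrightarrow> Y x \<le> Y xhat \<Longrightarrow> x = xhat"
    and z: "\<And>i. z i \<in> {xL..xH}" and zb: "\<And>i. Y (z i) \<le> Y xhat + e i" and e: "e \<longlonglongrightarrow> 0"
  shows "(\<lambda>i. \<bar>z i - xhat\<bar>) \<longlonglongrightarrow> 0"
proof (rule LIMSEQ_I)
  fix \<epsilon> :: real assume \<epsilon>: "0 < \<epsilon>"
  define A where "A = {xL..xH} \<inter> {x. \<epsilon> \<le> \<bar>x - xhat\<bar>}"
  show "\<exists>no. \<forall>n\<ge>no. norm (\<bar>z n - xhat\<bar> - 0) < \<epsilon>"
  proof (cases "A = {}")
    case True
    have "\<bar>z n - xhat\<bar> < \<epsilon>" for n
      using z[of n] True unfolding A_def by (metis (mono_tags) Int_iff empty_iff mem_Collect_eq not_le)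
    then show ?thesis by auto
  next
    case False
    have cA: "compact A" unfolding A_def
      by (intro compact_Int_closed compact_Icc closed_Collect_le continuous_intros)
    have "continuous_on {xL..xH} Y"
      by (rule lipschitz_on_continuous_on[of L], rule lipschitz_onI) (use lip L in \<open>auto simp: dist_real_def\<close>)
    then have "continuous_on A Y" unfolding A_def by (rule continuous_on_subset) auto
    then obtain a where a: "a \<in> A" "\<And>y. y \<in> A \<Longrightarrow> Y a \<le> Y y"
      using continuous_attains_inf[OF cA False] by blast
    have aF: "a \<in> {xL..xH}" and ae: "\<epsilon> \<le> \<bar>a - xhat\<bar>" using a(1) unfolding A_def by auto
    have "a \<noteq> xhat" using ae \<epsilon> by auto
    then have eta: "Y xhat < Y a" using uq[OF aF] by force
    obtain no where no: "\<And>n. n \<ge> no \<Longrightarrow> norm (e n - 0) < Y a - Y xhat"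
      using LIMSEQ_D[OF e, of "Y a - Y xhat"] eta by auto
    have "\<bar>z n - xhat\<bar> < \<epsilon>" if "n \<ge> no" for n
    proof (rule ccontr)
      assume "\<not> ?thesis"
      then have "z n \<in> A" using z unfolding A_def by auto
      then have "Y a \<le> Y (z n)" by (rule a(2))
      moreover have "e n < Y a - Y xhat" using no[OF that] by auto
      ultimately show False using zb[of n] by linarith
    qed
    then show ?thesis by auto
  qed
qed

theorem lemma11:
  fixes xL xH \<theta> :: real and nrm :: "real \<Rightarrow> real" and c :: "nat \<Rightarrow> real \<Rightarrow> real"
    and m :: "nat \<Rightarrow> nat"
  assumes "0 \<le> xL" and "xL < xH"
    and "is_real_norm nrm" and "\<theta> \<ge> 1"
    and "\<And>t. convex_on {xL..xH} (c t)"
    and "\<And>t x. x \<in> {xL..xH} \<Longrightarrow> 0 \<le> c t x"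
    and "unif_bounded_subgrad c {xL..xH}"
    and "\<And>i. m i \<ge> 2"
    and "(\<lambda>i. grid_spacing xL xH (m i)) \<longlonglongrightarrow> 0"
  shows "AE r in uniform_measure lborel {-1<..<1}.
           \<forall>xs :: nat \<Rightarrow> nat \<Rightarrow> real. \<forall>xhat :: nat \<Rightarrow> real.
             (\<forall>i t. t \<ge> 1 \<longrightarrow> rbg_choice (\<lambda>x. \<theta> * nrm x) c (grid xL xH (m i)) r t (xs i t)) \<and>
             (\<forall>t. t \<ge> 1 \<longrightarrow> rbg_choice (\<lambda>x. \<theta> * nrm x) c {xL..xH} r t (xhat t))
             \<longrightarrow> (\<forall>t. t \<ge> 1 \<longrightarrow> (\<lambda>i. \<bar>xs i t - xhat t\<bar>) \<longlonglongrightarrow> 0)"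
proof -
  define N where "N = (\<lambda>x::real. \<theta> * nrm x)"
  define K where "K = \<theta> * nrm 1"
  define F where "F = {xL..xH}"
  have nrm: "nrm z = \<bar>z\<bar> * nrm 1" for z
    using assms(3) unfolding is_real_norm_def by (metis mult.right_neutral)
  have n1: "nrm 1 > 0"
    using assms(3) unfolding is_real_norm_def by (metis less_eq_real_def zero_neq_one)
  have Kpos: "K > 0" unfolding K_def using n1 assms(4) by simp
  have NK: "N z = K * \<bar>z\<bar>" for z unfolding N_def K_def using nrm[of z] by (simp add: algebra_simps)
  have FF: "F \<subseteq> {0..}" unfolding F_def using assms(1) by auto
  obtain G where G: "\<And>t x. x \<in> F \<Longrightarrow> \<exists>g. \<bar>g\<bar> \<le> G \<and> (\<forall>y\<in>F. c t y \<ge> c t x + g * (y - x))"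
    using assms(7) unfolding unif_bounded_subgrad_def F_def by blast
  have xLF: "xL \<in> F" unfolding F_def using assms(2) by auto
  have G0: "0 \<le> G" using G[OF xLF, of 0] by auto
  have clip1: "c t x - c t y \<le> G * \<bar>x - y\<bar>" if xy: "x \<in> F" "y \<in> F" for t x y
  proof -
    obtain g where g: "\<bar>g\<bar> \<le> G" "\<forall>y\<in>F. c t y \<ge> c t x + g * (y - x)" using G[OF xy(1), of t] by blast
    have "c t x - c t y \<le> - g * (y - x)" using g(2) xy(2) by (auto simp: algebra_simps)
    also have "\<dots> \<le> \<bar>g\<bar> * \<bar>x - y\<bar>"
    proof -
      have "- g * (y - x) = g * (x - y)" by (simp add: algebra_simps)
      then show ?thesis by (simp add: abs_mult[symmetric] abs_ge_self)
    qed
    also have "\<dots> \<le> G * \<bar>x - y\<bar>" using g(1) by (intro mult_right_mono) auto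
    finally show ?thesis .
  qed
  have clip: "\<bar>c t x - c t y\<bar> \<le> G * \<bar>x - y\<bar>" if "x \<in> F" "y \<in> F" for t x y
    using clip1[OF that, of t] clip1[OF that(2,1), of t] by (simp add: abs_minus_commute abs_le_iff)
  have cnn: "\<And>t x. x \<in> F \<Longrightarrow> 0 \<le> c t x" using assms(6) unfolding F_def by auto
  have Fne: "F \<noteq> {}" using xLF by auto
  define B where "B = (\<Union>t. {r. \<exists>x1 x2. x1 < x2 \<and> rbg_choice N c F r t x1 \<and> rbg_choice N c F r t x2})"
  have cB: "countable B" unfolding B_def
    by (rule countable_UN) (simp_all add: bad_countable[where c=c, OF NK Kpos FF])
  have AEB: "AE r in lborel. r \<notin> B"
    by (rule AE_I'[OF countable_imp_null_set_lborel[OF cB]]) auto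
  have key: "(\<forall>i t. t \<ge> 1 \<longrightarrow> rbg_choice N c (grid xL xH (m i)) r t (xs i t)) \<and>
             (\<forall>t. t \<ge> 1 \<longrightarrow> rbg_choice N c F r t (xhat t))
             \<longrightarrow> (\<forall>t. t \<ge> 1 \<longrightarrow> (\<lambda>i. \<bar>xs i t - xhat t\<bar>) \<longlonglongrightarrow> 0)"
    if rB: "r \<notin> B" for r xs xhat
  proof (intro impI allI)
    assume H: "(\<forall>i t. t \<ge> 1 \<longrightarrow> rbg_choice N c (grid xL xH (m i)) r t (xs i t)) \<and>
             (\<forall>t. t \<ge> 1 \<longrightarrow> rbg_choice N c F r t (xhat t))"
    fix t :: nat assume t: "t \<ge> 1"
    define s where "s = t - 1"
    define Y where "Y x = work N c F s x + r * N x" for x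
    define L where "L = K + \<bar>r\<bar> * K"
    define \<delta> where "\<delta> i = grid_spacing xL xH (m i)" for i
    define D where "D i = real s * (2*K + G) * \<delta> i" for i
    define C where "C = 2 * (real s * (2*K + G)) + L"
    have xh: "rbg_choice N c F r t (xhat t)" using H t by auto
    have xhF: "xhat t \<in> F" and xhmin: "\<And>y. y \<in> F \<Longrightarrow> Y (xhat t) \<le> Y y"
      using xh unfolding rbg_choice_def Y_def s_def by auto
    have uq: "x = xhat t" if "x \<in> F" "Y x \<le> Y (xhat t)" for x
    proof -
      have cx: "rbg_choice N c F r t x"
        unfolding rbg_choice_def using that xhmin by (auto simp: Y_def s_def intro: order_trans)
      show ?thesis
      proof (rule ccontr)
        assume "x \<noteq> xhat t"
        then consider "x < xhat t" | "xhat t < x" by linarith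
        then have "r \<in> B" unfolding B_def using cx xh by cases blast+
        then show False using rB by simp
      qed
    qed
    have wlip: "\<bar>work N c F s x - work N c F s y\<bar> \<le> K * \<bar>x - y\<bar>" for x y
      using work_lip[where c=c and F=F and S=F, OF NK less_imp_le[OF Kpos] cnn order_refl Fne, where s=s and x=x and x'=y]
        work_lip[where c=c and F=F and S=F, OF NK less_imp_le[OF Kpos] cnn order_refl Fne, where s=s and x=y and x'=x]
      by (simp add: abs_le_iff abs_minus_commute)
    have Nlip: "\<bar>r * N x - r * N y\<bar> \<le> \<bar>r\<bar> * K * \<bar>x - y\<bar>" for x y
    proof -
      have "\<bar>r * N x - r * N y\<bar> = \<bar>r\<bar> * K * \<bar>\<bar>x\<bar> - \<bar>y\<bar>\<bar>"
        using NK Kpos by (simp add: abs_mult right_diff_distrib[symmetric] mult.assoc)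
      also have "\<dots> \<le> \<bar>r\<bar> * K * \<bar>x - y\<bar>"
        using Kpos by (intro mult_left_mono) (auto simp: abs_triangle_ineq3)
      finally show ?thesis .
    qed
    have Ylip: "\<bar>Y x - Y y\<bar> \<le> L * \<bar>x - y\<bar>" for x y
      using wlip[of x y] Nlip[of x y] unfolding Y_def L_def by (simp add: algebra_simps abs_le_iff)
    have L0: "0 \<le> L" unfolding L_def using Kpos by simp
    have zF: "xs i t \<in> F" for i
    proof -
      have "xs i t \<in> grid xL xH (m i)" using H t unfolding rbg_choice_def by auto
      then show ?thesis using grid_props(1)[OF assms(2) assms(8)[of i]] unfolding F_def by blast
    qed
    have zb: "Y (xs i t) \<le> Y (xhat t) + C * \<delta> i" for i
    proof -
      note gp = grid_props[OF assms(2) assms(8)[of i]]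
      have SF: "grid xL xH (m i) \<subseteq> F" using gp(1) unfolding F_def .
      have dense: "\<And>y. y \<in> F \<Longrightarrow> \<exists>y'\<in>grid xL xH (m i). \<bar>y - y'\<bar> \<le> \<delta> i"
        using gp(4) unfolding F_def \<delta>_def by blast
      obtain y' where y': "y' \<in> grid xL xH (m i)" "\<bar>xhat t - y'\<bar> \<le> \<delta> i" using dense[OF xhF] by blast
      have ap: "\<bar>work N c (grid xL xH (m i)) s x - work N c F s x\<bar> \<le> D i" for x
        unfolding D_def by (rule work_approx[where c=c and F=F, OF NK less_imp_le[OF Kpos] cnn clip SF gp(2) dense G0])
      have ch: "work N c (grid xL xH (m i)) s (xs i t) + r * N (xs i t)
          \<le> work N c (grid xL xH (m i)) s y' + r * N y'"
        using H t y'(1) unfolding rbg_choice_def s_def by auto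
      have "Y y' \<le> Y (xhat t) + L * \<bar>xhat t - y'\<bar>" using Ylip[of y' "xhat t"] by (simp add: abs_minus_commute abs_le_iff)
      moreover have "L * \<bar>xhat t - y'\<bar> \<le> L * \<delta> i" using y'(2) L0 by (rule mult_left_mono)
      moreover have "C * \<delta> i = 2 * D i + L * \<delta> i" unfolding C_def D_def by (simp add: algebra_simps)
      ultimately show ?thesis using ap[of "xs i t"] ap[of y'] ch unfolding Y_def by (simp add: abs_le_iff)
    qed
    have e: "(\<lambda>i. C * \<delta> i) \<longlonglongrightarrow> 0"
      using tendsto_mult[OF tendsto_const assms(9), of C] unfolding \<delta>_def by simp
    show "(\<lambda>i. \<bar>xs i t - xhat t\<bar>) \<longlonglongrightarrow> 0"
      by (rule argmin_conv[of xL xH Y L "xhat t" "\<lambda>i. xs i t" "\<lambda>i. C * \<delta> i"])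
        (use Ylip L0 xhF xhmin uq zF zb e in \<open>auto simp: F_def\<close>)
  qed
  show ?thesis
  proof (rule AE_uniform_measureI)
    show "{-1<..<1::real} \<in> sets lborel" by simp
    show "AE r in lborel. r \<in> {-1<..<1} \<longrightarrow>
           (\<forall>xs :: nat \<Rightarrow> nat \<Rightarrow> real. \<forall>xhat :: nat \<Rightarrow> real.
             (\<forall>i t. t \<ge> 1 \<longrightarrow> rbg_choice (\<lambda>x. \<theta> * nrm x) c (grid xL xH (m i)) r t (xs i t)) \<and>
             (\<forall>t. t \<ge> 1 \<longrightarrow> rbg_choice (\<lambda>x. \<theta> * nrm x) c {xL..xH} r t (xhat t))
             \<longrightarrow> (\<forall>t. t \<ge> 1 \<longrightarrow> (\<lambda>i. \<bar>xs i t - xhat t\<bar>) \<longlonglongrightarrow> 0))"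
      using AEB
    proof eventually_elim
      case (elim r)
      show ?case
        by (rule impI, intro allI, rule key[OF elim, unfolded N_def F_def])
    qed
  qed
qed

end
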